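(* Let $(X,d_X,\mu)$ be a compact metric measure space and let $\iota:X\to Z$ be an isometry onto its image $X':=\iota(X)\subset Z$ in a metric space $(Z,d_Z)$. Let $D^{X'}$ be the distance kernel operator of $(X',d_Z,\iota_\#\mu)$. Then there is a bijection $\iota^*:L^2(X,\mu)\to L^2(X',\iota_\#\mu)$ such that $D^{X'}\circ\iota^*=\iota^*\circ D^X$. In particular, $\phi$ is an eigenfunction of $D^X$ with eigenvalue $\lambda$ if and only if $\iota^*\phi$ is an eigenfunction of $D^{X'}$ with eigenvalue $\lambda$, and, denoting by $\Phi_k:X\to\mathbb{C}^k$ and $\Phi'_k:X'\to\mathbb{C}^k$ the distance kernel embeddings of $X$ and $X'$, we have $\Phi_k(X)=\Phi'_k(X')$.
   Context: For a compact metric measure space $(X,d,\mu)$, the distance kernel operator is $(D^Xf)(x)=\int_X f(y)d(x,y)\,d\mu(y)$ on $L^2(X,\mu)$. Its eigenvalues $\lambda_i$ are real and ordered by decreasing absolute value (assumed non-zero with distinct absolute values among the top $k$), with $L^2$-orthonormal real eigenfunctions $\phi_i$ whose signs are fixed by $\langle\phi_i,|\phi_i|\rangle>0$. With $\alpha_i=\sqrt{\lambda_i}\phi_i$ (square root with positive imaginary part if $\lambda_i<0$), the distance kernel embedding is $\Phi_k(x)=(\alpha_1(x),\dots,\alpha_k(x))$. $\iota_\#\mu$ denotes the pushforward measure. *)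

theory Defs
  imports "HOL-Analysis.Analysis"
begin

text \<open>Square-integrable real functions (representatives of elements of L^2(M)).\<close>
definition L2 :: "'a measure \<Rightarrow> ('a \<Rightarrow> real) set" where
  "L2 M = {f \<in> borel_measurable M. integrable M (\<lambda>x. (f x)\<^sup>2)}"

text \<open>Equality in L^2, i.e. almost-everywhere equality.\<close>
definition ae_eq :: "'a measure \<Rightarrow> ('a \<Rightarrow> real) \<Rightarrow> ('a \<Rightarrow> real) \<Rightarrow> bool" where
  "ae_eq M f g \<longleftrightarrow> (AE x in M. f x = g x)"

definition L2_inner :: "'a measure \<Rightarrow> ('a \<Rightarrow> real) \<Rightarrow> ('a \<Rightarrow> real) \<Rightarrow> real" where
  "L2_inner M f g = (LINT x|M. f x * g x)"

definition dk_op :: "'a::metric_space measure \<Rightarrow> ('a \<Rightarrow> real) \<Rightarrow> 'a \<Rightarrow> real" where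
  "dk_op M f x = (LINT y|M. f y * dist x y)"

definition is_eigenfunction :: "'a::metric_space measure \<Rightarrow> ('a \<Rightarrow> real) \<Rightarrow> real \<Rightarrow> bool" where
  "is_eigenfunction M \<phi> l \<longleftrightarrow>
     \<phi> \<in> L2 M \<and> \<not> ae_eq M \<phi> (\<lambda>_. 0) \<and> ae_eq M (dk_op M \<phi>) (\<lambda>x. l * \<phi> x)"

definition sqrt_ev :: "real \<Rightarrow> complex" where
  "sqrt_ev l = (if l \<ge> 0 then complex_of_real (sqrt l) else \<i> * complex_of_real (sqrt (- l)))"

text \<open>Top-k eigendata (0-indexed): nonzero eigenvalues ordered by strictly decreasing
  absolute value (counted with multiplicity, distinct absolute values among the top k, and
  strictly larger than the next one), L^2-orthonormal eigenfunctions (continuous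
  representative: the eigen-equation holds at every point of the space), sign fixed by
  <phi,|phi|> > 0.\<close>
definition dk_eigendata ::
  "'a::metric_space measure \<Rightarrow> nat \<Rightarrow> (nat \<Rightarrow> real) \<Rightarrow> (nat \<Rightarrow> 'a \<Rightarrow> real) \<Rightarrow> bool" where
  "dk_eigendata M k lam phi \<longleftrightarrow>
     (\<forall>i<k. phi i \<in> L2 M \<and> lam i \<noteq> 0 \<and>
            (\<forall>x\<in>space M. dk_op M (phi i) x = lam i * phi i x)) \<and>
     (\<forall>i<k. \<forall>j<k. L2_inner M (phi i) (phi j) = (if i = j then 1 else 0)) \<and>
     (\<forall>i<k. L2_inner M (phi i) (\<lambda>x. \<bar>phi i x\<bar>) > 0) \<and>
     (\<forall>i<k. \<forall>\<psi> \<mu>. is_eigenfunction M \<psi> \<mu> \<and> (\<forall>j<i. L2_inner M \<psi> (phi j) = 0)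
                 \<longrightarrow> \<bar>\<mu>\<bar> \<le> \<bar>lam i\<bar>) \<and>
     (\<forall>i<k. \<forall>\<psi> \<mu>. is_eigenfunction M \<psi> \<mu> \<and> (\<forall>j\<le>i. L2_inner M \<psi> (phi j) = 0)
                 \<longrightarrow> \<bar>\<mu>\<bar> < \<bar>lam i\<bar>)"

text \<open>Phi is a (the) distance kernel embedding of dimension k; C^k rendered as complex lists of length k.\<close>
definition dk_embedding :: "'a::metric_space measure \<Rightarrow> nat \<Rightarrow> ('a \<Rightarrow> complex list) \<Rightarrow> bool" where
  "dk_embedding M k \<Phi> \<longleftrightarrow>
     (\<exists>lam phi. dk_eigendata M k lam phi \<and>
        \<Phi> = (\<lambda>x. map (\<lambda>i. sqrt_ev (lam i) * complex_of_real (phi i x)) [0..<k]))"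

end

theory Submission
  imports Defs
begin


locale cmm =
  fixes M :: "'a::metric_space measure"
  assumes cpt: "compact (space M)"
    and sets_eq: "sets M = sets (restrict_space borel (space M))"
    and fin: "finite_measure M"
begin

lemma meas_cont:
  fixes h :: "'a \<Rightarrow> real"
  assumes "continuous_on (space M) h"
  shows "h \<in> borel_measurable M"
  using borel_measurable_continuous_on_restrict[OF assms] measurable_cong_sets[OF sets_eq refl]
  by blast

lemma meas_dist1: "(\<lambda>y. dist x y) \<in> borel_measurable M"
  by (rule meas_cont) (intro continuous_intros)

lemma meas_dist2: "(\<lambda>y. dist y x) \<in> borel_measurable M"
  by (rule meas_cont) (intro continuous_intros)

lemma dist_bound: "\<exists>B\<ge>0. \<forall>x\<in>space M. \<forall>y\<in>space M. dist x y \<le> B"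
  using diameter_bounded_bound[OF compact_imp_bounded[OF cpt]]
  by (metis dual_order.trans ex_in_conv zero_le_dist)

lemma dist_meas_prod: "(\<lambda>z. dist (fst z) (snd z)) \<in> borel_measurable (M \<Otimes>\<^sub>M M)"
proof -
  have "\<forall>n. \<exists>K. K \<subseteq> space M \<and> finite K \<and> space M \<subseteq> \<Union>((\<lambda>x. ball x (inverse (real (Suc n)))) ` K)"
  proof
    fix n
    have cov: "space M \<subseteq> (\<Union>c\<in>space M. ball c (inverse (real (Suc n))))"
      using centre_in_ball by fastforce
    obtain C' where "C' \<subseteq> space M" "finite C'" "space M \<subseteq> (\<Union>c\<in>C'. ball c (inverse (real (Suc n))))"
      using compactE_image[OF cpt _ cov] by blast
    then show "\<exists>K. K \<subseteq> space M \<and> finite K \<and> space M \<subseteq> \<Union>((\<lambda>x. ball x (inverse (real (Suc n)))) ` K)"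
      by blast
  qed
  then obtain K where K: "\<And>n. K n \<subseteq> space M" "\<And>n. finite (K n)"
    "\<And>n. space M \<subseteq> \<Union>((\<lambda>x. ball x (inverse (real (Suc n)))) ` K n)"
    by metis
  define g where "g n z = Min ((\<lambda>d. dist (fst z) d + dist d (snd z)) ` K n)" for n z
  show ?thesis
  proof (rule borel_measurable_LIMSEQ_metric[where f = g])
    fix n
    show "g n \<in> borel_measurable (M \<Otimes>\<^sub>M M)"
      unfolding g_def
      apply (rule borel_measurable_Min[OF K(2)])
      apply (rule borel_measurable_add)
      apply (rule measurable_compose[OF measurable_fst meas_dist2])
      apply (rule measurable_compose[OF measurable_snd meas_dist1])
      done
  next
    fix z assume z: "z \<in> space (M \<Otimes>\<^sub>M M)"
    then have x: "fst z \<in> space M" and y: "snd z \<in> space M" by (auto simp: space_pair_measure)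
    have b: "dist (fst z) (snd z) \<le> g n z \<and> g n z \<le> dist (fst z) (snd z) + 2 * inverse (real (Suc n))" for n
    proof -
      have "fst z \<in> (\<Union>x\<in>K n. ball x (inverse (real (Suc n))))"
        using K(3)[of n] x by (rule subsetD)
      then obtain d where d: "d \<in> K n" "dist d (fst z) < inverse (real (Suc n))"
        unfolding mem_ball[symmetric] by (rule UN_E)
      have ne: "K n \<noteq> {}" using d by auto
      have "g n z \<le> dist (fst z) d + dist d (snd z)"
        unfolding g_def by (rule Min_le[OF finite_imageI[OF K(2)] imageI[OF d(1)]])
      also have "\<dots> \<le> dist (fst z) (snd z) + 2 * inverse (real (Suc n))"
        using d dist_triangle[of d "snd z" "fst z"] by (simp add: dist_commute)
      finally have 1: "g n z \<le> dist (fst z) (snd z) + 2 * inverse (real (Suc n))" .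
      have 2: "dist (fst z) (snd z) \<le> g n z"
        unfolding g_def using ne by (subst Min_ge_iff[OF finite_imageI[OF K(2)]]) (auto simp: dist_triangle)
      show ?thesis using 1 2 by simp
    qed
    have l: "(\<lambda>n. dist (fst z) (snd z) + 2 * inverse (real (Suc n))) \<longlonglongrightarrow> dist (fst z) (snd z) + 2 * 0"
      by (intro tendsto_intros LIMSEQ_inverse_real_of_nat)
    show "(\<lambda>n. g n z) \<longlonglongrightarrow> dist (fst z) (snd z)"
    proof (rule tendsto_sandwich[where f="\<lambda>n. dist (fst z) (snd z)" and h="\<lambda>n. dist (fst z) (snd z) + 2 * inverse (real (Suc n))"])
      show "\<forall>\<^sub>F n in sequentially. dist (fst z) (snd z) \<le> g n z"
        using b by (intro always_eventually) blast
      show "\<forall>\<^sub>F n in sequentially. g n z \<le> dist (fst z) (snd z) + 2 * inverse (real (Suc n))"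
        using b by (intro always_eventually) blast
      show "(\<lambda>n. dist (fst z) (snd z) + 2 * inverse (real (Suc n))) \<longlonglongrightarrow> dist (fst z) (snd z)"
        using l by simp
    qed simp
  qed
qed

lemma abs_le_sq: "\<bar>t::real\<bar> \<le> 1 + t\<^sup>2"
proof -
  have "0 \<le> (\<bar>t\<bar> - 1/2)\<^sup>2" by simp
  moreover have "(\<bar>t\<bar> - 1/2)\<^sup>2 = t\<^sup>2 - \<bar>t\<bar> + 1/4"
    by (simp add: power2_eq_square algebra_simps)
  ultimately show ?thesis by linarith
qed

lemma abs_prod_le: "\<bar>(s::real) * t\<bar> \<le> s\<^sup>2 + t\<^sup>2"
proof -
  have "0 \<le> (\<bar>s\<bar> - \<bar>t\<bar>)\<^sup>2" by simp
  moreover have "(\<bar>s\<bar> - \<bar>t\<bar>)\<^sup>2 = s\<^sup>2 - 2 * \<bar>s * t\<bar> + t\<^sup>2"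
    by (simp add: power2_eq_square algebra_simps abs_mult)
  moreover have "0 \<le> \<bar>s * t\<bar>" by simp
  ultimately show ?thesis by linarith
qed

lemma L2_meas: "f \<in> L2 M \<Longrightarrow> f \<in> borel_measurable M"
  by (simp add: L2_def)

lemma L2_int: assumes "f \<in> L2 M" shows "integrable M f"
proof -
  interpret finite_measure M by (rule fin)
  have I: "integrable M (\<lambda>x. 1 + (f x)\<^sup>2)"
    using assms by (intro Bochner_Integration.integrable_add) (auto simp: L2_def)
  show ?thesis
  proof (rule Bochner_Integration.integrable_bound[OF I])
    show "f \<in> borel_measurable M" using assms by (simp add: L2_def)
    show "AE x in M. norm (f x) \<le> norm (1 + (f x)\<^sup>2)"
      using abs_le_sq by (intro AE_I2) (simp add: add_nonneg_nonneg)
  qed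
qed

lemma L2_prod: assumes "f \<in> L2 M" "g \<in> L2 M" shows "integrable M (\<lambda>x. f x * g x)"
proof -
  have I: "integrable M (\<lambda>x. (f x)\<^sup>2 + (g x)\<^sup>2)"
    using assms by (intro Bochner_Integration.integrable_add) (auto simp: L2_def)
  show ?thesis
  proof (rule Bochner_Integration.integrable_bound[OF I])
    show "(\<lambda>x. f x * g x) \<in> borel_measurable M" using assms by (auto simp: L2_def intro: borel_measurable_times)
    show "AE x in M. norm (f x * g x) \<le> norm ((f x)\<^sup>2 + (g x)\<^sup>2)"
      using abs_prod_le by (intro AE_I2) (simp add: add_nonneg_nonneg)
  qed
qed

lemma dk_int: assumes "f \<in> L2 M" "x \<in> space M" shows "integrable M (\<lambda>y. f y * dist x y)"
proof -
  obtain B where B: "B \<ge> 0" "\<forall>x\<in>space M. \<forall>y\<in>space M. dist x y \<le> B" using dist_bound by blast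
  have I: "integrable M (\<lambda>y. B * \<bar>f y\<bar>)"
    using L2_int[OF assms(1)] by (intro integrable_mult_right integrable_abs)
  show ?thesis
  proof (rule Bochner_Integration.integrable_bound[OF I])
    show "(\<lambda>y. f y * dist x y) \<in> borel_measurable M"
      using L2_meas[OF assms(1)] meas_dist1 by (rule borel_measurable_times)
    show "AE y in M. norm (f y * dist x y) \<le> norm (B * \<bar>f y\<bar>)"
    proof (rule AE_I2)
      fix y assume "y \<in> space M"
      then have "dist x y \<le> B" using B assms(2) by blast
      then show "norm (f y * dist x y) \<le> norm (B * \<bar>f y\<bar>)"
        using B(1) by (simp add: abs_mult) (metis abs_ge_zero mult.commute mult_left_mono)
    qed
  qed
qed

lemma dk_lin:
  assumes "f \<in> L2 M" "g \<in> L2 M" "x \<in> space M"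
  shows "dk_op M (\<lambda>y. f y - c * g y) x = dk_op M f x - c * dk_op M g x"
proof -
  have "dk_op M (\<lambda>y. f y - c * g y) x = (LINT y|M. f y * dist x y - c * (g y * dist x y))"
    unfolding dk_op_def by (simp add: algebra_simps)
  also have "\<dots> = dk_op M f x - c * dk_op M g x"
    unfolding dk_op_def using dk_int[OF assms(1,3)] dk_int[OF assms(2,3)]
    by (simp add: integral_diff integral_mult_right)
  finally show ?thesis .
qed

lemma selfadj:
  assumes f: "f \<in> L2 M" and g: "g \<in> L2 M"
  shows "(LINT x|M. dk_op M f x * g x) = (LINT x|M. f x * dk_op M g x)"
proof -
  interpret finite_measure M by (rule fin)
  interpret P: pair_sigma_finite M M by unfold_locales
  have sfm: "sigma_finite_measure M" using fin by (simp add: finite_measure_def)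
  obtain B where B: "B \<ge> 0" "\<forall>x\<in>space M. \<forall>y\<in>space M. dist x y \<le> B" using dist_bound by blast
  define F where "F x y = g x * f y * dist x y" for x y
  have [measurable]: "f \<in> borel_measurable M" "g \<in> borel_measurable M" using f g by (auto simp: L2_def)
  have dm[measurable]: "(\<lambda>z. dist (fst z) (snd z)) \<in> borel_measurable (M \<Otimes>\<^sub>M M)" by (rule dist_meas_prod)
  have Fm: "case_prod F \<in> borel_measurable (M \<Otimes>\<^sub>M M)"
  proof -
    have "(\<lambda>z. g (fst z) * f (snd z) * dist (fst z) (snd z)) \<in> borel_measurable (M \<Otimes>\<^sub>M M)"
      by measurable
    then show ?thesis by (simp add: F_def case_prod_beta')
  qed
  have fi: "(\<integral>\<^sup>+ y. ennreal (\<bar>f y\<bar>) \<partial>M) < \<infinity>" and gi: "(\<integral>\<^sup>+ x. ennreal (B * \<bar>g x\<bar>) \<partial>M) < \<infinity>"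
    using L2_int[OF f] integrable_mult_right[OF L2_int[OF g], of B] unfolding integrable_iff_bounded
    by (auto simp: abs_mult B(1))
  have Hm: "(\<lambda>z. ennreal (B * \<bar>g (fst z)\<bar>) * ennreal (\<bar>f (snd z)\<bar>)) \<in> borel_measurable (M \<Otimes>\<^sub>M M)"
    by measurable
  have "(\<integral>\<^sup>+ z. ennreal (norm (case_prod F z)) \<partial>(M \<Otimes>\<^sub>M M))
      \<le> (\<integral>\<^sup>+ z. ennreal (B * \<bar>g (fst z)\<bar>) * ennreal (\<bar>f (snd z)\<bar>) \<partial>(M \<Otimes>\<^sub>M M))"
  proof (rule nn_integral_mono)
    fix z assume "z \<in> space (M \<Otimes>\<^sub>M M)"
    then have d: "dist (fst z) (snd z) \<le> B" using B by (auto simp: space_pair_measure)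
    have "norm (case_prod F z) = (\<bar>g (fst z)\<bar> * \<bar>f (snd z)\<bar>) * dist (fst z) (snd z)"
      by (simp add: F_def case_prod_beta' abs_mult)
    also have "\<dots> \<le> (\<bar>g (fst z)\<bar> * \<bar>f (snd z)\<bar>) * B"
      by (rule mult_left_mono) (use d in auto)
    finally have "norm (case_prod F z) \<le> (B * \<bar>g (fst z)\<bar>) * \<bar>f (snd z)\<bar>"
      by (simp add: mult_ac)
    then show "ennreal (norm (case_prod F z)) \<le> ennreal (B * \<bar>g (fst z)\<bar>) * ennreal (\<bar>f (snd z)\<bar>)"
      by (simp add: ennreal_mult'[symmetric] B(1))
  qed
  also have "\<dots> = (\<integral>\<^sup>+ x. \<integral>\<^sup>+ y. ennreal (B * \<bar>g x\<bar>) * ennreal (\<bar>f y\<bar>) \<partial>M \<partial>M)"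
    using sigma_finite_measure.nn_integral_fst[OF sfm Hm] by simp
  also have "\<dots> = (\<integral>\<^sup>+ x. ennreal (B * \<bar>g x\<bar>) * (\<integral>\<^sup>+ y. ennreal (\<bar>f y\<bar>) \<partial>M) \<partial>M)"
    by (simp add: nn_integral_cmult)
  also have "\<dots> = (\<integral>\<^sup>+ x. ennreal (B * \<bar>g x\<bar>) \<partial>M) * (\<integral>\<^sup>+ y. ennreal (\<bar>f y\<bar>) \<partial>M)"
    by (simp add: nn_integral_multc)
  also have "\<dots> < \<infinity>" using fi gi by (simp add: ennreal_mult_less_top)
  finally have Fi: "integrable (M \<Otimes>\<^sub>M M) (case_prod F)"
    using Fm by (simp add: integrable_iff_bounded)
  have eq: "(\<integral>y. (\<integral>x. F x y \<partial>M) \<partial>M) = (\<integral>x. (\<integral>y. F x y \<partial>M) \<partial>M)"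
    by (rule P.Fubini_integral[OF Fi])
  have r: "(\<integral>x. (\<integral>y. F x y \<partial>M) \<partial>M) = (LINT x|M. dk_op M f x * g x)"
  proof (rule Bochner_Integration.integral_cong[OF refl])
    fix x
    have "(\<integral>y. F x y \<partial>M) = (LINT y|M. g x * (f y * dist x y))"
      unfolding F_def by (simp add: mult.assoc)
    also have "\<dots> = g x * dk_op M f x"
      unfolding dk_op_def by (rule integral_mult_right_zero)
    finally show "(\<integral>y. F x y \<partial>M) = dk_op M f x * g x" by simp
  qed
  have l: "(\<integral>y. (\<integral>x. F x y \<partial>M) \<partial>M) = (LINT x|M. f x * dk_op M g x)"
  proof (rule Bochner_Integration.integral_cong[OF refl])
    fix y
    have "(\<integral>x. F x y \<partial>M) = (LINT x|M. f y * (g x * dist y x))"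
      unfolding F_def by (simp add: mult_ac dist_commute)
    also have "\<dots> = f y * dk_op M g y"
      unfolding dk_op_def by (rule integral_mult_right_zero)
    finally show "(\<integral>x. F x y \<partial>M) = f y * dk_op M g y" .
  qed
  show ?thesis using eq l r by simp
qed

lemma L2_diff:
  assumes a: "a \<in> L2 M" and b: "b \<in> L2 M"
  shows "(\<lambda>x. b x - c * a x) \<in> L2 M"
proof -
  have m: "(\<lambda>x. b x - c * a x) \<in> borel_measurable M"
    using a b by (auto simp: L2_def)
  have i: "integrable M (\<lambda>x. b x * b x - 2 * c * (a x * b x) + c\<^sup>2 * (a x * a x))"
    using L2_prod[OF a a] L2_prod[OF a b] L2_prod[OF b b]
    by (intro Bochner_Integration.integrable_add Bochner_Integration.integrable_diff integrable_mult_right)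
  have e: "(\<lambda>x. (b x - c * a x)\<^sup>2) = (\<lambda>x. b x * b x - 2 * c * (a x * b x) + c\<^sup>2 * (a x * a x))"
    by (rule ext) (simp add: power2_eq_square algebra_simps)
  show ?thesis using m i e by (simp add: L2_def)
qed

lemma L2_inner_diff:
  assumes a: "a \<in> L2 M" and b: "b \<in> L2 M" and g: "g \<in> L2 M"
  shows "L2_inner M (\<lambda>x. b x - c * a x) g = L2_inner M b g - c * L2_inner M a g"
proof -
  have "L2_inner M (\<lambda>x. b x - c * a x) g = (LINT x|M. b x * g x - c * (a x * g x))"
    unfolding L2_inner_def by (simp add: algebra_simps)
  also have "\<dots> = L2_inner M b g - c * L2_inner M a g"
    unfolding L2_inner_def using L2_prod[OF b g] L2_prod[OF a g]
    by (simp add: integral_diff integral_mult_right)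
  finally show ?thesis .
qed

lemma not_ae0:
  assumes "\<phi> \<in> L2 M" "L2_inner M \<phi> \<phi> \<noteq> 0"
  shows "\<not> ae_eq M \<phi> (\<lambda>_. 0)"
proof
  assume "ae_eq M \<phi> (\<lambda>_. 0)"
  then have "AE x in M. \<phi> x * \<phi> x = 0" unfolding ae_eq_def by eventually_elim simp
  then have "(LINT x|M. \<phi> x * \<phi> x) = (LINT x|M. 0)"
    using assms(1) by (intro integral_cong_AE) (auto simp: L2_def)
  then show False using assms(2) by (simp add: L2_inner_def)
qed

lemma eig_of:
  assumes "\<phi> \<in> L2 M" "L2_inner M \<phi> \<phi> \<noteq> 0" "\<forall>x\<in>space M. dk_op M \<phi> x = l * \<phi> x"
  shows "is_eigenfunction M \<phi> l"
proof -
  have "ae_eq M (dk_op M \<phi>) (\<lambda>x. l * \<phi> x)" unfolding ae_eq_def using assms(3) by (auto intro: AE_I2)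
  then show ?thesis using assms(1) not_ae0[OF assms(1,2)] unfolding is_eigenfunction_def by blast
qed

lemma inner_cong:
  assumes "\<forall>x\<in>space M. g x = h x"
  shows "L2_inner M f g = L2_inner M f h"
  unfolding L2_inner_def using assms by (intro Bochner_Integration.integral_cong) auto

lemma unique:
  assumes E1: "dk_eigendata M k lam phi" and E2: "dk_eigendata M k lam2 phi2"
  shows "i < k \<Longrightarrow> lam i = lam2 i \<and> (\<forall>x\<in>space M. phi i x = phi2 i x)"
proof (induction i rule: less_induct)
  case (less i)
  have IH: "\<And>j. j < i \<Longrightarrow> \<forall>x\<in>space M. phi j x = phi2 j x" using less by auto
  define a where "a = phi i"
  define b where "b = phi2 i"
  define la where "la = lam i"
  define lb where "lb = lam2 i"
  note D1 = E1[unfolded dk_eigendata_def] and D2 = E2[unfolded dk_eigendata_def]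
  have aL: "a \<in> L2 M" and la0: "la \<noteq> 0" and ea: "\<forall>x\<in>space M. dk_op M a x = la * a x"
    using D1 less(2) by (auto simp: a_def la_def)
  have bL: "b \<in> L2 M" and lb0: "lb \<noteq> 0" and eb: "\<forall>x\<in>space M. dk_op M b x = lb * b x"
    using D2 less(2) by (auto simp: b_def lb_def)
  have aa: "L2_inner M a a = 1" using D1 less(2) by (auto simp: a_def)
  have bb: "L2_inner M b b = 1" using D2 less(2) by (auto simp: b_def)
  have sa: "L2_inner M a (\<lambda>x. \<bar>a x\<bar>) > 0" using D1 less(2) by (auto simp: a_def)
  have sb: "L2_inner M b (\<lambda>x. \<bar>b x\<bar>) > 0" using D2 less(2) by (auto simp: b_def)
  have oa: "\<forall>j<i. L2_inner M a (phi2 j) = 0"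
  proof (intro allI impI)
    fix j assume j: "j < i"
    have "L2_inner M a (phi2 j) = L2_inner M a (phi j)" using IH[OF j] by (intro inner_cong) auto
    also have "\<dots> = 0" using D1 less(2) j by (auto simp: a_def)
    finally show "L2_inner M a (phi2 j) = 0" .
  qed
  have ob: "\<forall>j<i. L2_inner M b (phi j) = 0"
  proof (intro allI impI)
    fix j assume j: "j < i"
    have "L2_inner M b (phi j) = L2_inner M b (phi2 j)" using IH[OF j] by (intro inner_cong) auto
    also have "\<dots> = 0" using D2 less(2) j by (auto simp: b_def)
    finally show "L2_inner M b (phi j) = 0" .
  qed
  have efa: "is_eigenfunction M a la" using eig_of[OF aL] aa ea by simp
  have efb: "is_eigenfunction M b lb" using eig_of[OF bL] bb eb by simp
  have le1: "\<bar>lb\<bar> \<le> \<bar>la\<bar>"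
    using D1 less(2) efb ob unfolding la_def by blast
  have le2: "\<bar>la\<bar> \<le> \<bar>lb\<bar>"
    using D2 less(2) efa oa unfolding lb_def by blast
  define c where "c = L2_inner M b a"
  have c0: "c \<noteq> 0"
  proof
    assume "c = 0"
    then have "\<forall>j\<le>i. L2_inner M b (phi j) = 0" using ob c_def a_def
      by (metis le_neq_implies_less)
    then have "\<bar>lb\<bar> < \<bar>la\<bar>" using D1 less(2) efb unfolding la_def by blast
    then show False using le2 by simp
  qed
  have lab: "la = lb"
  proof -
    have "(LINT x|M. dk_op M a x * b x) = (LINT x|M. a x * dk_op M b x)"
      by (rule selfadj[OF aL bL])
    moreover have "(LINT x|M. dk_op M a x * b x) = la * c"
    proof -
      have "(LINT x|M. dk_op M a x * b x) = (LINT x|M. la * (b x * a x))"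
        using ea by (intro Bochner_Integration.integral_cong) (auto simp: mult_ac)
      then show ?thesis by (simp add: c_def L2_inner_def)
    qed
    moreover have "(LINT x|M. a x * dk_op M b x) = lb * c"
    proof -
      have "(LINT x|M. a x * dk_op M b x) = (LINT x|M. lb * (b x * a x))"
        using eb by (intro Bochner_Integration.integral_cong) (auto simp: mult_ac)
      then show ?thesis by (simp add: c_def L2_inner_def)
    qed
    ultimately show ?thesis using c0 by simp
  qed
  define r where "r = (\<lambda>x. b x - c * a x)"
  have rL: "r \<in> L2 M" unfolding r_def by (rule L2_diff[OF aL bL])
  have er: "\<forall>x\<in>space M. dk_op M r x = lb * r x"
    unfolding r_def using dk_lin[OF bL aL] ea eb lab by (simp add: algebra_simps)
  have orr: "\<forall>j\<le>i. L2_inner M r (phi j) = 0"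
  proof (intro allI impI)
    fix j assume j: "j \<le> i"
    have pj: "phi j \<in> L2 M" using D1 less(2) j by auto
    have "L2_inner M r (phi j) = L2_inner M b (phi j) - c * L2_inner M a (phi j)"
      unfolding r_def by (rule L2_inner_diff[OF aL bL pj])
    also have "\<dots> = 0"
    proof (cases "j = i")
      case True then show ?thesis using aa by (simp add: c_def a_def[symmetric])
    next
      case False then have "j < i" using j by simp
      then show ?thesis using ob D1 less(2) by (auto simp: a_def)
    qed
    finally show "L2_inner M r (phi j) = 0" .
  qed
  have rae: "ae_eq M r (\<lambda>_. 0)"
  proof (rule ccontr)
    assume "\<not> ae_eq M r (\<lambda>_. 0)"
    then have "is_eigenfunction M r lb" using rL er unfolding is_eigenfunction_def ae_eq_def
      by (auto intro: AE_I2)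
    then have "\<bar>lb\<bar> < \<bar>la\<bar>" using D1 less(2) orr unfolding la_def by blast
    then show False using lab by simp
  qed
  then have bca: "AE x in M. b x = c * a x" unfolding ae_eq_def r_def by simp
  have am[measurable]: "a \<in> borel_measurable M" and bm[measurable]: "b \<in> borel_measurable M"
    using aL bL by (auto simp: L2_def)
  have "1 = L2_inner M b b" using bb by simp
  also have "\<dots> = (LINT x|M. c\<^sup>2 * (a x * a x))"
    unfolding L2_inner_def using bca
    by (intro integral_cong_AE) (auto elim!: eventually_mono simp: power2_eq_square)
  also have "\<dots> = c\<^sup>2" using aa by (simp add: L2_inner_def)
  finally have c2: "c\<^sup>2 = 1" by simp
  have "L2_inner M b (\<lambda>x. \<bar>b x\<bar>) = (LINT x|M. (c * \<bar>c\<bar>) * (a x * \<bar>a x\<bar>))"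
    unfolding L2_inner_def using bca
    by (intro integral_cong_AE) (auto elim!: eventually_mono simp: abs_mult)
  also have "\<dots> = (c * \<bar>c\<bar>) * L2_inner M a (\<lambda>x. \<bar>a x\<bar>)" by (simp add: L2_inner_def)
  finally have "(c * \<bar>c\<bar>) * L2_inner M a (\<lambda>x. \<bar>a x\<bar>) > 0" using sb by simp
  then have "c * \<bar>c\<bar> > 0" using sa by (simp add: zero_less_mult_iff)
  then have "c > 0" by (simp add: zero_less_mult_iff)
  moreover have "c = 1 \<or> c = -1" using c2 by (simp add: power2_eq_1_iff)
  ultimately have c1: "c = 1" by linarith
  have bea: "AE x in M. a x = b x" using bca c1 by (auto elim!: eventually_mono)
  have pt: "\<forall>x\<in>space M. a x = b x"
  proof
    fix x assume x: "x \<in> space M"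
    have "la * a x = dk_op M a x" using ea x by simp
    also have "\<dots> = dk_op M b x"
      unfolding dk_op_def using bea meas_dist1[of x]
      by (intro integral_cong_AE) (auto elim!: eventually_mono)
    also have "\<dots> = la * b x" using eb x lab by simp
    finally show "a x = b x" using la0 by simp
  qed
  show ?case using lab pt by (simp add: a_def b_def la_def lb_def)
qed

end



locale iso = cmm M for M :: "'a::metric_space measure" +
  fixes \<iota> :: "'a \<Rightarrow> 'b::metric_space"
  assumes isom: "\<forall>x\<in>space M. \<forall>y\<in>space M. dist (\<iota> x) (\<iota> y) = dist x y"
begin

abbreviation "N \<equiv> restrict_space borel (\<iota> ` space M)"
abbreviation "MD \<equiv> distr M N \<iota>"
abbreviation "j \<equiv> inv_into (space M) \<iota>"

lemma inj: "inj_on \<iota> (space M)"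
proof (rule inj_onI)
  fix x y assume xy: "x \<in> space M" "y \<in> space M" "\<iota> x = \<iota> y"
  have "dist x y = dist (\<iota> x) (\<iota> y)" using isom xy(1,2) by simp
  then show "x = y" using xy(3) by simp
qed

lemma j_i: "x \<in> space M \<Longrightarrow> j (\<iota> x) = x"
  using inj by (simp add: inv_into_f_f)

lemma space_MD: "space MD = \<iota> ` space M"
  by (simp add: space_restrict_space)

lemma sets_MD: "sets MD = sets N"
  by simp

lemma cont_i: "continuous_on (space M) \<iota>"
  unfolding continuous_on_iff
proof (intro ballI allI impI)
  fix x e assume x: "x \<in> space M" and e: "(0::real) < e"
  show "\<exists>d>0. \<forall>x'\<in>space M. dist x' x < d \<longrightarrow> dist (\<iota> x') (\<iota> x) < e"
    using e x isom by (intro exI[of _ e]) auto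
qed

lemma cont_j: "continuous_on (\<iota> ` space M) j"
  unfolding continuous_on_iff
proof (intro ballI allI impI)
  fix y e assume y: "y \<in> \<iota> ` space M" and e: "(0::real) < e"
  show "\<exists>d>0. \<forall>y'\<in>\<iota> ` space M. dist y' y < d \<longrightarrow> dist (j y') (j y) < e"
    using e y isom j_i by (intro exI[of _ e]) auto
qed

lemma meas_i: "\<iota> \<in> measurable M N"
proof (rule measurable_restrict_space2)
  show "\<iota> \<in> space M \<rightarrow> \<iota> ` space M" by auto
  show "\<iota> \<in> borel_measurable M"
    using borel_measurable_continuous_on_restrict[OF cont_i] measurable_cong_sets[OF sets_eq refl]
    by blast
qed

lemma meas_i': "\<iota> \<in> measurable M MD"
  using meas_i by (simp add: measurable_distr_eq2)

lemma meas_j: "j \<in> measurable N M"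
proof -
  have "j \<in> measurable N (restrict_space borel (space M))"
  proof (rule measurable_restrict_space2)
    show "j \<in> space N \<rightarrow> space M" by (auto simp: inv_into_into space_restrict_space)
    show "j \<in> measurable N borel" by (rule borel_measurable_continuous_on_restrict[OF cont_j])
  qed
  then show ?thesis using measurable_cong_sets[OF refl sets_eq] by blast
qed

lemma meas_j': "j \<in> measurable MD M"
  using meas_j by (simp add: measurable_cong_sets[OF sets_MD refl])

lemma meas_T: "f \<in> borel_measurable M \<Longrightarrow> (\<lambda>y. f (j y)) \<in> borel_measurable MD"
  using measurable_comp[OF meas_j'] by (simp add: comp_def)

lemma meas_pull: "g \<in> borel_measurable MD \<Longrightarrow> (\<lambda>x. g (\<iota> x)) \<in> borel_measurable M"
  using measurable_comp[OF meas_i'] by (simp add: comp_def)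

lemma meas_dist': "(\<lambda>y. dist z y) \<in> borel_measurable MD"
proof -
  have "(\<lambda>y. dist z y) \<in> borel_measurable N"
    by (rule measurable_restrict_space1, rule borel_measurable_continuous_onI) (intro continuous_intros)
  then show ?thesis by (simp add: measurable_cong_sets[OF sets_MD refl])
qed

lemma AE_transfer: "(AE y in MD. P y) \<longleftrightarrow> (AE x in M. P (\<iota> x))"
proof
  assume "AE y in MD. P y"
  then obtain A where A: "{y \<in> space MD. \<not> P y} \<subseteq> A" "emeasure MD A = 0" "A \<in> sets MD"
    by (rule AE_E)
  show "AE x in M. P (\<iota> x)"
  proof (rule AE_I)
    show "\<iota> -` A \<inter> space M \<in> sets M" using meas_i' A(3) by (rule measurable_sets)
    show "emeasure M (\<iota> -` A \<inter> space M) = 0" using A(2,3) meas_i by (simp add: emeasure_distr)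
    show "{x \<in> space M. \<not> P (\<iota> x)} \<subseteq> \<iota> -` A \<inter> space M" using A(1) by (auto simp: space_restrict_space)
  qed
next
  assume "AE x in M. P (\<iota> x)"
  then obtain A where A: "{x \<in> space M. \<not> P (\<iota> x)} \<subseteq> A" "emeasure M A = 0" "A \<in> sets M"
    by (rule AE_E)
  have As: "A \<subseteq> space M" using A(3) by (rule sets.sets_into_space)
  show "AE y in MD. P y"
  proof (rule AE_I)
    show Bs: "j -` A \<inter> space MD \<in> sets MD" using meas_j' A(3) by (rule measurable_sets)
    have "\<iota> -` (j -` A \<inter> space MD) \<inter> space M = A"
      using As j_i by (auto simp: space_restrict_space) (metis subsetD)
    then show "emeasure MD (j -` A \<inter> space MD) = 0" using A(2) Bs meas_i
      by (simp add: emeasure_distr del: space_distr)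
    show "{y \<in> space MD. \<not> P y} \<subseteq> j -` A \<inter> space MD"
    proof
      fix y assume "y \<in> {y \<in> space MD. \<not> P y}"
      then obtain x where x: "x \<in> space M" "y = \<iota> x" "\<not> P y" by (auto simp: space_restrict_space)
      then have "x \<in> A" using A(1) by auto
      then show "y \<in> j -` A \<inter> space MD" using x j_i by (auto simp: space_restrict_space)
    qed
  qed
qed

lemma AE_cong_space: "(\<And>x. x \<in> space M \<Longrightarrow> P x \<longleftrightarrow> Q x) \<Longrightarrow> (AE x in M. P x) \<longleftrightarrow> (AE x in M. Q x)"
  by (rule AE_cong) simp

lemma ae_T: "ae_eq MD (\<lambda>y. f (j y)) (\<lambda>y. g (j y)) \<longleftrightarrow> ae_eq M f g"
  unfolding ae_eq_def AE_transfer by (rule AE_cong_space) (simp add: j_i)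

lemma L2_T: assumes "f \<in> L2 M" shows "(\<lambda>y. f (j y)) \<in> L2 MD"
proof -
  have fm: "f \<in> borel_measurable M" using assms by (simp add: L2_def)
  have m: "(\<lambda>y. (f (j y))\<^sup>2) \<in> borel_measurable MD" using meas_T[OF fm] by measurable
  have "integrable MD (\<lambda>y. (f (j y))\<^sup>2) \<longleftrightarrow> integrable M (\<lambda>x. (f (j (\<iota> x)))\<^sup>2)"
    using meas_i m by (simp add: integrable_distr_eq del: space_distr)
  also have "\<dots> \<longleftrightarrow> integrable M (\<lambda>x. (f x)\<^sup>2)"
    by (rule Bochner_Integration.integrable_cong) (auto simp: j_i)
  finally show ?thesis using assms meas_T[OF fm] by (simp add: L2_def)
qed

lemma L2_pull: assumes "g \<in> L2 MD" shows "(\<lambda>x. g (\<iota> x)) \<in> L2 M"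
proof -
  have gm: "g \<in> borel_measurable MD" using assms by (simp add: L2_def)
  have m: "(\<lambda>y. (g y)\<^sup>2) \<in> borel_measurable MD" using gm by measurable
  have "integrable MD (\<lambda>y. (g y)\<^sup>2) \<longleftrightarrow> integrable M (\<lambda>x. (g (\<iota> x))\<^sup>2)"
    using meas_i m by (simp add: integrable_distr_eq del: space_distr)
  then show ?thesis using assms meas_pull[OF gm] by (simp add: L2_def)
qed

lemma int_pull: fixes g :: "'b \<Rightarrow> real" assumes "g \<in> borel_measurable MD" shows "integral\<^sup>L MD g = (LINT x|M. g (\<iota> x))"
proof -
  have "g \<in> borel_measurable N" using assms by simp
  from integral_distr[OF meas_i this] show ?thesis by simp
qed

lemma dk_pull:
  assumes gm: "g \<in> borel_measurable MD" and x: "x \<in> space M"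
  shows "dk_op MD g (\<iota> x) = dk_op M (\<lambda>z. g (\<iota> z)) x"
proof -
  have "(\<lambda>y. g y * dist (\<iota> x) y) \<in> borel_measurable MD"
    using gm meas_dist' by (rule borel_measurable_times)
  then have "dk_op MD g (\<iota> x) = (LINT z|M. g (\<iota> z) * dist (\<iota> x) (\<iota> z))"
    unfolding dk_op_def by (rule int_pull)
  also have "\<dots> = dk_op M (\<lambda>z. g (\<iota> z)) x"
    unfolding dk_op_def using x isom by (intro Bochner_Integration.integral_cong) auto
  finally show ?thesis .
qed

lemma inner_pull:
  assumes "g \<in> borel_measurable MD" "h \<in> borel_measurable MD"
  shows "L2_inner MD g h = L2_inner M (\<lambda>x. g (\<iota> x)) (\<lambda>x. h (\<iota> x))"
  unfolding L2_inner_def using assms by (intro int_pull) (rule borel_measurable_times)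

lemma dk_T:
  assumes fm: "f \<in> borel_measurable M" and x: "x \<in> space M"
  shows "dk_op MD (\<lambda>y. f (j y)) (\<iota> x) = dk_op M f x"
proof -
  have "dk_op MD (\<lambda>y. f (j y)) (\<iota> x) = dk_op M (\<lambda>z. f (j (\<iota> z))) x"
    by (rule dk_pull[OF meas_T[OF fm] x])
  also have "\<dots> = dk_op M f x"
    unfolding dk_op_def by (intro Bochner_Integration.integral_cong) (auto simp: j_i)
  finally show ?thesis .
qed

lemma eig_T:
  assumes "\<phi> \<in> L2 M"
  shows "is_eigenfunction M \<phi> l \<longleftrightarrow> is_eigenfunction MD (\<lambda>y. \<phi> (j y)) l"
proof -
  have fm: "\<phi> \<in> borel_measurable M" using assms by (simp add: L2_def)
  have 1: "ae_eq MD (\<lambda>y. \<phi> (j y)) (\<lambda>_. 0) \<longleftrightarrow> ae_eq M \<phi> (\<lambda>_. 0)"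
    using ae_T[of \<phi> "\<lambda>_. 0"] by simp
  have 2: "ae_eq MD (dk_op MD (\<lambda>y. \<phi> (j y))) (\<lambda>y. l * \<phi> (j y)) \<longleftrightarrow> ae_eq M (dk_op M \<phi>) (\<lambda>x. l * \<phi> x)"
    unfolding ae_eq_def AE_transfer by (rule AE_cong) (simp add: j_i dk_T[OF fm])
  show ?thesis unfolding is_eigenfunction_def using 1 2 assms L2_T[OF assms] by blast
qed

lemma inner_T:
  assumes "\<psi> \<in> L2 M" "g \<in> borel_measurable MD"
  shows "L2_inner MD (\<lambda>y. \<psi> (j y)) g = L2_inner M \<psi> (\<lambda>x. g (\<iota> x))"
proof -
  have "L2_inner MD (\<lambda>y. \<psi> (j y)) g = L2_inner M (\<lambda>x. \<psi> (j (\<iota> x))) (\<lambda>x. g (\<iota> x))"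
    using assms by (intro inner_pull meas_T) (auto simp: L2_def)
  also have "\<dots> = L2_inner M \<psi> (\<lambda>x. g (\<iota> x))"
    unfolding L2_inner_def by (intro Bochner_Integration.integral_cong) (auto simp: j_i)
  finally show ?thesis .
qed

lemma eigendata_pull:
  assumes E: "dk_eigendata MD k lam phi"
  shows "dk_eigendata M k lam (\<lambda>i x. phi i (\<iota> x))"
proof -
  note D = E[unfolded dk_eigendata_def]
  have pL: "\<And>i. i < k \<Longrightarrow> phi i \<in> L2 MD" using D by blast
  have pm: "\<And>i. i < k \<Longrightarrow> phi i \<in> borel_measurable MD" using pL by (simp add: L2_def)
  have c1: "\<forall>i<k. (\<lambda>x. phi i (\<iota> x)) \<in> L2 M \<and> lam i \<noteq> 0 \<and>
            (\<forall>x\<in>space M. dk_op M (\<lambda>x. phi i (\<iota> x)) x = lam i * phi i (\<iota> x))"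
  proof (intro allI impI conjI ballI)
    fix i assume i: "i < k"
    show "(\<lambda>x. phi i (\<iota> x)) \<in> L2 M" using L2_pull[OF pL[OF i]] .
    show "lam i \<noteq> 0" using D i by blast
    fix x assume x: "x \<in> space M"
    have "dk_op M (\<lambda>x. phi i (\<iota> x)) x = dk_op MD (phi i) (\<iota> x)"
      using dk_pull[OF pm[OF i] x] by simp
    also have "\<dots> = lam i * phi i (\<iota> x)"
      using D i x by (auto simp: space_restrict_space)
    finally show "dk_op M (\<lambda>x. phi i (\<iota> x)) x = lam i * phi i (\<iota> x)" .
  qed
  have c2: "\<forall>i<k. \<forall>j<k. L2_inner M (\<lambda>x. phi i (\<iota> x)) (\<lambda>x. phi j (\<iota> x)) = (if i = j then 1 else 0)"
    using D inner_pull[OF pm pm] by auto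
  have c3: "\<forall>i<k. L2_inner M (\<lambda>x. phi i (\<iota> x)) (\<lambda>x. \<bar>phi i (\<iota> x)\<bar>) > 0"
  proof (intro allI impI)
    fix i assume i: "i < k"
    have "(\<lambda>y. \<bar>phi i y\<bar>) \<in> borel_measurable MD" using pm[OF i] by (rule borel_measurable_abs)
    then have "L2_inner MD (phi i) (\<lambda>y. \<bar>phi i y\<bar>) = L2_inner M (\<lambda>x. phi i (\<iota> x)) (\<lambda>x. \<bar>phi i (\<iota> x)\<bar>)"
      using inner_pull[OF pm[OF i]] by simp
    then show "L2_inner M (\<lambda>x. phi i (\<iota> x)) (\<lambda>x. \<bar>phi i (\<iota> x)\<bar>) > 0" using D i by auto
  qed
  have tr: "L2_inner MD (\<lambda>y. \<psi> (j y)) (phi jj) = L2_inner M \<psi> (\<lambda>x. phi jj (\<iota> x))"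
    if "\<psi> \<in> L2 M" "jj < k" for \<psi> jj
    using inner_T[OF that(1) pm[OF that(2)]] .
  have c4: "\<forall>i<k. \<forall>\<psi> \<mu>. is_eigenfunction M \<psi> \<mu> \<and> (\<forall>jj<i. L2_inner M \<psi> (\<lambda>x. phi jj (\<iota> x)) = 0)
                 \<longrightarrow> \<bar>\<mu>\<bar> \<le> \<bar>lam i\<bar>"
  proof (intro allI impI)
    fix i \<psi> \<mu> assume i: "i < k" and h: "is_eigenfunction M \<psi> \<mu> \<and> (\<forall>jj<i. L2_inner M \<psi> (\<lambda>x. phi jj (\<iota> x)) = 0)"
    have psiL: "\<psi> \<in> L2 M" using h by (simp add: is_eigenfunction_def)
    have "is_eigenfunction MD (\<lambda>y. \<psi> (j y)) \<mu>" using h eig_T[OF psiL] by simp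
    moreover have "\<forall>jj<i. L2_inner MD (\<lambda>y. \<psi> (j y)) (phi jj) = 0" using h tr[OF psiL] i by simp
    ultimately show "\<bar>\<mu>\<bar> \<le> \<bar>lam i\<bar>" using D i by blast
  qed
  have c5: "\<forall>i<k. \<forall>\<psi> \<mu>. is_eigenfunction M \<psi> \<mu> \<and> (\<forall>jj\<le>i. L2_inner M \<psi> (\<lambda>x. phi jj (\<iota> x)) = 0)
                 \<longrightarrow> \<bar>\<mu>\<bar> < \<bar>lam i\<bar>"
  proof (intro allI impI)
    fix i \<psi> \<mu> assume i: "i < k" and h: "is_eigenfunction M \<psi> \<mu> \<and> (\<forall>jj\<le>i. L2_inner M \<psi> (\<lambda>x. phi jj (\<iota> x)) = 0)"
    have psiL: "\<psi> \<in> L2 M" using h by (simp add: is_eigenfunction_def)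
    have "is_eigenfunction MD (\<lambda>y. \<psi> (j y)) \<mu>" using h eig_T[OF psiL] by simp
    moreover have "\<forall>jj\<le>i. L2_inner MD (\<lambda>y. \<psi> (j y)) (phi jj) = 0" using h tr[OF psiL] i by simp
    ultimately show "\<bar>\<mu>\<bar> < \<bar>lam i\<bar>" using D i by blast
  qed
  show ?thesis unfolding dk_eigendata_def using c1 c2 c3 c4 c5 by blast
qed

end


theorem proposition5p7:
  fixes M :: "'a::metric_space measure" and \<iota> :: "'a \<Rightarrow> 'b::metric_space"
  assumes "compact (space M)"
    and "sets M = sets (restrict_space borel (space M))"
    and "finite_measure M"
    and "\<forall>x\<in>space M. \<forall>y\<in>space M. dist (\<iota> x) (\<iota> y) = dist x y"
  defines "M' \<equiv> distr M (restrict_space borel (\<iota> ` space M)) \<iota>"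
  shows "(\<exists>T :: ('a \<Rightarrow> real) \<Rightarrow> ('b \<Rightarrow> real).
            (\<forall>f\<in>L2 M. T f \<in> L2 M') \<and>
            (\<forall>f\<in>L2 M. \<forall>g\<in>L2 M. ae_eq M' (T f) (T g) \<longleftrightarrow> ae_eq M f g) \<and>
            (\<forall>h\<in>L2 M'. \<exists>f\<in>L2 M. ae_eq M' (T f) h) \<and>
            (\<forall>f\<in>L2 M. ae_eq M' (dk_op M' (T f)) (T (dk_op M f))) \<and>
            (\<forall>\<phi>\<in>L2 M. \<forall>l. is_eigenfunction M \<phi> l \<longleftrightarrow> is_eigenfunction M' (T \<phi>) l))
         \<and> (\<forall>k \<Phi> \<Phi>'. dk_embedding M k \<Phi> \<and> dk_embedding M' k \<Phi>' \<longrightarrow>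
              \<Phi> ` space M = \<Phi>' ` (\<iota> ` space M))"
proof -
  interpret iso M \<iota>
    by (rule iso.intro[OF cmm.intro[OF assms(1-3)] iso_axioms.intro[OF assms(4)]])
  define T where "T = (\<lambda>(f::'a \<Rightarrow> real) y. f (inv_into (space M) \<iota> y))"
  have P1: "(\<forall>f\<in>L2 M. T f \<in> L2 MD) \<and>
            (\<forall>f\<in>L2 M. \<forall>g\<in>L2 M. ae_eq MD (T f) (T g) \<longleftrightarrow> ae_eq M f g) \<and>
            (\<forall>h\<in>L2 MD. \<exists>f\<in>L2 M. ae_eq MD (T f) h) \<and>
            (\<forall>f\<in>L2 M. ae_eq MD (dk_op MD (T f)) (T (dk_op M f))) \<and>
            (\<forall>\<phi>\<in>L2 M. \<forall>l. is_eigenfunction M \<phi> l \<longleftrightarrow> is_eigenfunction MD (T \<phi>) l)"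
  proof (intro conjI ballI allI)
    fix f assume "f \<in> L2 M" then show "T f \<in> L2 MD" unfolding T_def by (rule L2_T)
  next
    fix f g show "ae_eq MD (T f) (T g) \<longleftrightarrow> ae_eq M f g" unfolding T_def by (rule ae_T)
  next
    fix h assume h: "h \<in> L2 MD"
    show "\<exists>f\<in>L2 M. ae_eq MD (T f) h"
    proof (intro bexI)
      show "(\<lambda>x. h (\<iota> x)) \<in> L2 M" by (rule L2_pull[OF h])
      show "ae_eq MD (T (\<lambda>x. h (\<iota> x))) h"
        unfolding T_def ae_eq_def AE_transfer by (rule AE_I2) (simp add: j_i)
    qed
  next
    fix f assume f: "f \<in> L2 M"
    then have fm: "f \<in> borel_measurable M" by (simp add: L2_def)
    show "ae_eq MD (dk_op MD (T f)) (T (dk_op M f))"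
      unfolding T_def ae_eq_def AE_transfer by (rule AE_I2) (simp add: j_i dk_T[OF fm])
  next
    fix \<phi> l assume "\<phi> \<in> L2 M"
    then show "is_eigenfunction M \<phi> l \<longleftrightarrow> is_eigenfunction MD (T \<phi>) l"
      unfolding T_def by (rule eig_T)
  qed
  have P2: "\<forall>k \<Phi> \<Phi>'. dk_embedding M k \<Phi> \<and> dk_embedding MD k \<Phi>' \<longrightarrow>
              \<Phi> ` space M = \<Phi>' ` (\<iota> ` space M)"
  proof (intro allI impI)
    fix k \<Phi> \<Phi>' assume h: "dk_embedding M k \<Phi> \<and> dk_embedding MD k \<Phi>'"
    obtain lam phi where E1: "dk_eigendata M k lam phi"
      and Phi: "\<Phi> = (\<lambda>x. map (\<lambda>i. sqrt_ev (lam i) * complex_of_real (phi i x)) [0..<k])"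
      using h unfolding dk_embedding_def by blast
    obtain lam' phi' where E2: "dk_eigendata MD k lam' phi'"
      and Phi': "\<Phi>' = (\<lambda>x. map (\<lambda>i. sqrt_ev (lam' i) * complex_of_real (phi' i x)) [0..<k])"
      using h unfolding dk_embedding_def by blast
    have U: "\<And>i. i < k \<Longrightarrow> lam i = lam' i \<and> (\<forall>x\<in>space M. phi i x = phi' i (\<iota> x))"
      using unique[OF E1 eigendata_pull[OF E2]] by simp
    have eq: "\<Phi> x = \<Phi>' (\<iota> x)" if x: "x \<in> space M" for x
      unfolding Phi Phi' using U x by (intro map_cong refl) auto
    show "\<Phi> ` space M = \<Phi>' ` (\<iota> ` space M)"
      unfolding image_image by (rule image_cong[OF refl eq])
  qed
  show ?thesis unfolding M'_def
    apply (rule conjI)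
     apply (rule exI[of _ T], rule P1)
    apply (rule P2)
    done
qed

end
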